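(* Every finite affinely independent set $A\subset\mathbb{R}^n$ is Euclidean sub-$p$-toral for all sufficiently large primes $p\ge p_0(A)$.
   Context: A $p$-torus is a group isomorphic to $(\mathbb{Z}_p)^\alpha$ for some $\alpha\ge1$. A set $X\subset\mathbb{R}^k$ is Euclidean sub-$p$-toral if there exist $n\ge k$, a $p$-torus $G$ and an action of $G$ on $\mathbb{R}^n$ by isometries such that $X$ (viewed in $\mathbb{R}^n$ via the standard inclusion $\mathbb{R}^k\subset\mathbb{R}^n$) is contained in a single $G$-orbit. *)

theory Defs
  imports "HOL-Analysis.Analysis" "HOL-Algebra.Group_Action" "HOL-Algebra.Product_Groups"
    "HOL-Algebra.Elementary_Groups"
begin

text \<open>Euclidean space R^n, modelled as real sequences vanishing from index n on.
  The standard inclusion R^k \<subseteq> R^n (k \<le> n) is then literally set inclusion.\<close>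
definition Rn :: "nat \<Rightarrow> (nat \<Rightarrow> real) set" where
  "Rn n = {x. \<forall>i\<ge>n. x i = 0}"

definition edist :: "nat \<Rightarrow> (nat \<Rightarrow> real) \<Rightarrow> (nat \<Rightarrow> real) \<Rightarrow> real" where
  "edist n x y = sqrt (\<Sum>i<n. (x i - y i)^2)"

definition affinely_independent :: "(nat \<Rightarrow> real) set \<Rightarrow> bool" where
  "affinely_independent A \<longleftrightarrow>
     (\<forall>c. (\<Sum>a\<in>A. c a) = 0 \<and> (\<forall>i. (\<Sum>a\<in>A. c a * a i) = 0) \<longrightarrow> (\<forall>a\<in>A. c a = 0))"

definition p_torus :: "nat \<Rightarrow> nat \<Rightarrow> (nat \<Rightarrow> int) monoid" where
  "p_torus p \<alpha> = product_group {..<\<alpha>} (\<lambda>_. integer_mod_group p)"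

definition euclidean_sub_p_toral :: "nat \<Rightarrow> nat \<Rightarrow> (nat \<Rightarrow> real) set \<Rightarrow> bool" where
  "euclidean_sub_p_toral p k X \<longleftrightarrow>
     (\<exists>n \<ge> k. \<exists>\<alpha> \<ge> 1. \<exists>\<phi>.
        group_action (p_torus p \<alpha>) (Rn n) \<phi> \<and>
        (\<forall>g \<in> carrier (p_torus p \<alpha>). \<forall>x \<in> Rn n. \<forall>y \<in> Rn n.
            edist n (\<phi> g x) (\<phi> g y) = edist n x y) \<and>
        (\<exists>x0 \<in> Rn n. X \<subseteq> orbit (p_torus p \<alpha>) \<phi> x0))"

end

theory Submission
  imports Defs
begin

definition sqd :: "nat \<Rightarrow> (nat \<Rightarrow> real) \<Rightarrow> (nat \<Rightarrow> real) \<Rightarrow> real" where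
  "sqd n x y = (\<Sum>i<n. (x i - y i)^2)"

lemma edist_sqd: "edist n x y = sqrt (sqd n x y)"
  by (simp add: edist_def sqd_def)

lemma sqd_nonneg: "0 \<le> sqd n x y"
  by (simp add: sqd_def sum_nonneg)

lemma sqd_sym: "sqd n x y = sqd n y x"
  unfolding sqd_def by (rule sum.cong) (auto simp: power2_commute)

lemma sqd_self[simp]: "sqd n x x = 0"
  by (simp add: sqd_def)

lemma Rn_zero: "x \<in> Rn n \<Longrightarrow> n \<le> i \<Longrightarrow> x i = 0"
  by (simp add: Rn_def)

lemma sqd_mono_dim:
  assumes "x \<in> Rn k" "y \<in> Rn k" "k \<le> n"
  shows "sqd n x y = sqd k x y"
proof -
  have "{..<n} = {..<k} \<union> {k..<n}" using assms(3) by auto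
  then have "sqd n x y = sqd k x y + (\<Sum>i\<in>{k..<n}. (x i - y i)^2)"
    unfolding sqd_def by (simp add: sum.union_disjoint[of "{..<k}" "{k..<n}"] ivl_disj_int)
  also have "(\<Sum>i\<in>{k..<n}. (x i - y i)^2) = 0"
    using assms by (auto intro!: sum.neutral simp: Rn_def)
  finally show ?thesis by simp
qed

lemma sqd_eq_zero:
  assumes "x \<in> Rn n" "y \<in> Rn n" "sqd n x y = 0" shows "x = y"
proof
  fix i
  show "x i = y i"
  proof (cases "i < n")
    case True
    have "\<forall>j\<in>{..<n}. (x j - y j)^2 = 0"
      using assms(3) unfolding sqd_def by (subst (asm) sum_nonneg_eq_0_iff) auto
    then show ?thesis using True by auto
  next
    case False then show ?thesis using assms by (simp add: Rn_def)
  qed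
qed

lemma sum_sq_expand:
  "(\<Sum>i\<in>I. (z i - (t::real) * d i)^2) = (\<Sum>i\<in>I. (z i)^2) - 2*t*(\<Sum>i\<in>I. z i * d i) + t^2 * (\<Sum>i\<in>I. (d i)^2)"
  by (simp add: power2_eq_square algebra_simps sum.distrib sum_subtractf sum_distrib_left)

definition rcoef :: "nat \<Rightarrow> (nat \<Rightarrow> real) \<Rightarrow> (nat \<Rightarrow> real) \<Rightarrow> (nat \<Rightarrow> real) \<Rightarrow> real" where
  "rcoef n u v x = 2 * (\<Sum>j<n. (x j - (u j + v j)/2) * (u j - v j)) / (\<Sum>j<n. (u j - v j)^2)"

definition rfl :: "nat \<Rightarrow> (nat \<Rightarrow> real) \<Rightarrow> (nat \<Rightarrow> real) \<Rightarrow> (nat \<Rightarrow> real) \<Rightarrow> (nat \<Rightarrow> real)" where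
  "rfl n u v x = (\<lambda>i. x i - rcoef n u v x * (u i - v i))"

lemma dd_pos:
  assumes "u \<in> Rn n" "v \<in> Rn n" "u \<noteq> v"
  shows "0 < (\<Sum>j<n. (u j - v j)^2)"
proof -
  obtain i where i: "u i \<noteq> v i" using assms(3) by auto
  have "i < n" by (rule ccontr) (use assms i in \<open>auto simp: Rn_def\<close>)
  show ?thesis
    by (rule sum_pos2[of _ i]) (use i \<open>i<n\<close> in auto)
qed

lemma rfl_Rn: "u \<in> Rn n \<Longrightarrow> v \<in> Rn n \<Longrightarrow> x \<in> Rn n \<Longrightarrow> rfl n u v x \<in> Rn n"
  by (simp add: Rn_def rfl_def)

lemma rcoef_rfl:
  assumes "u \<in> Rn n" "v \<in> Rn n" "u \<noteq> v"
  shows "rcoef n u v (rfl n u v x) = - rcoef n u v x"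
proof -
  let ?D = "\<Sum>j<n. (u j - v j)^2"
  let ?S = "\<Sum>j<n. (x j - (u j + v j)/2) * (u j - v j)"
  let ?c = "rcoef n u v x"
  have D: "?D > 0" using dd_pos[OF assms] .
  have "(\<Sum>j<n. (rfl n u v x j - (u j + v j)/2) * (u j - v j))
      = (\<Sum>j<n. (x j - (u j + v j)/2) * (u j - v j) - ?c * (u j - v j)^2)"
    by (rule sum.cong) (auto simp: rfl_def algebra_simps power2_eq_square)
  also have "\<dots> = ?S - ?c * ?D" by (simp add: sum_subtractf sum_distrib_left)
  finally have e: "(\<Sum>j<n. (rfl n u v x j - (u j + v j)/2) * (u j - v j)) = ?S - ?c * ?D" .
  have c: "?c = 2 * ?S / ?D" by (simp add: rcoef_def)
  show ?thesis
    unfolding rcoef_def[of n u v "rfl n u v x"] e using D c by (simp add: field_simps)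
qed

lemma rfl_rfl:
  assumes "u \<in> Rn n" "v \<in> Rn n" "u \<noteq> v"
  shows "rfl n u v (rfl n u v x) = x"
  using rcoef_rfl[OF assms, of x] by (simp add: rfl_def[of n u v "rfl n u v x"]) (simp add: rfl_def)

lemma rfl_u:
  assumes "u \<in> Rn n" "v \<in> Rn n" "u \<noteq> v"
  shows "rfl n u v u = v"
proof -
  have D: "(\<Sum>j<n. (u j - v j)^2) > 0" using dd_pos[OF assms] .
  have "(\<Sum>j<n. (u j - (u j + v j)/2) * (u j - v j)) = (\<Sum>j<n. (u j - v j)^2 / 2)"
    by (rule sum.cong) (auto simp: power2_eq_square field_simps)
  also have "\<dots> = (\<Sum>j<n. (u j - v j)^2) / 2" by (simp add: sum_divide_distrib)
  finally have "rcoef n u v u = 1" using D by (simp add: rcoef_def)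
  then show ?thesis by (simp add: rfl_def)
qed

lemma rfl_fix:
  assumes "sqd n x u = sqd n x v"
  shows "rfl n u v x = x"
proof -
  have "(\<Sum>j<n. (x j - (u j + v j)/2) * (u j - v j)) = (\<Sum>j<n. ((x j - v j)^2 - (x j - u j)^2)/2)"
    by (rule sum.cong) (auto simp: power2_eq_square field_simps)
  also have "\<dots> = (sqd n x v - sqd n x u)/2"
    by (simp add: sqd_def sum_divide_distrib[symmetric] sum_subtractf)
  finally have "rcoef n u v x = 0" using assms by (simp add: rcoef_def)
  then show ?thesis by (simp add: rfl_def)
qed

lemma rfl_isom:
  assumes "u \<in> Rn n" "v \<in> Rn n" "u \<noteq> v"
  shows "sqd n (rfl n u v x) (rfl n u v y) = sqd n x y"
proof -
  let ?D = "\<Sum>j<n. (u j - v j)^2"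
  have D: "?D > 0" using dd_pos[OF assms] .
  let ?P = "\<Sum>j<n. (x j - y j) * (u j - v j)"
  let ?t = "rcoef n u v x - rcoef n u v y"
  have "(\<Sum>j<n. (x j - (u j + v j)/2) * (u j - v j)) - (\<Sum>j<n. (y j - (u j + v j)/2) * (u j - v j)) = ?P"
    by (simp add: sum_subtractf[symmetric] algebra_simps)
  then have t: "?t = 2 * ?P / ?D"
    unfolding rcoef_def by (simp add: diff_divide_distrib[symmetric] algebra_simps)
  have "sqd n (rfl n u v x) (rfl n u v y) = (\<Sum>j<n. ((x j - y j) - ?t * (u j - v j))^2)"
    unfolding sqd_def rfl_def by (rule sum.cong) (auto simp: algebra_simps)
  also have "\<dots> = sqd n x y - 2 * ?t * ?P + ?t^2 * ?D"
    by (simp add: sum_sq_expand sqd_def)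
  also have "\<dots> = sqd n x y" using D unfolding t by (simp add: power2_eq_square field_simps)
  finally show ?thesis .
qed

lemma rfl_bij:
  assumes "u \<in> Rn n" "v \<in> Rn n" "u \<noteq> v"
  shows "bij_betw (rfl n u v) (Rn n) (Rn n)"
  by (rule bij_betw_byWitness[where f'="rfl n u v"]) (auto simp: rfl_rfl[OF assms] rfl_Rn[OF assms(1,2)])

lemma congr_ext:
  "finite S \<Longrightarrow> S \<subseteq> Rn n \<Longrightarrow> (\<forall>a\<in>S. y a \<in> Rn n) \<Longrightarrow>
   (\<forall>a\<in>S. \<forall>a'\<in>S. sqd n (y a) (y a') = sqd n a a') \<Longrightarrow>
   \<exists>\<Phi>. bij_betw \<Phi> (Rn n) (Rn n) \<and> (\<forall>x\<in>Rn n. \<forall>z\<in>Rn n. sqd n (\<Phi> x) (\<Phi> z) = sqd n x z)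
       \<and> (\<forall>a\<in>S. \<Phi> (y a) = a)"
proof (induction S rule: finite_induct)
  case empty
  show ?case by (rule exI[of _ id]) (auto simp: bij_betw_def)
next
  case (insert a S)
  then obtain \<Phi> where bij: "bij_betw \<Phi> (Rn n) (Rn n)"
    and iso: "\<forall>x\<in>Rn n. \<forall>z\<in>Rn n. sqd n (\<Phi> x) (\<Phi> z) = sqd n x z"
    and fx: "\<forall>a\<in>S. \<Phi> (y a) = a" by auto
  have ya: "y a \<in> Rn n" and aR: "a \<in> Rn n" using insert by auto
  define z where "z = \<Phi> (y a)"
  have zR: "z \<in> Rn n" using bij ya unfolding z_def by (auto simp: bij_betw_def)
  show ?case
  proof (cases "z = a")
    case True
    then show ?thesis using bij iso fx z_def by auto
  next
    case False
    define \<Psi> where "\<Psi> = rfl n z a \<circ> \<Phi>"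
    have "bij_betw \<Psi> (Rn n) (Rn n)" unfolding \<Psi>_def
      using bij rfl_bij[OF zR aR False] by (rule bij_betw_trans)
    moreover have "\<forall>x\<in>Rn n. \<forall>w\<in>Rn n. sqd n (\<Psi> x) (\<Psi> w) = sqd n x w"
      unfolding \<Psi>_def using iso rfl_isom[OF zR aR False] by simp
    moreover have "\<Psi> (y a) = a" unfolding \<Psi>_def using rfl_u[OF zR aR False] z_def by simp
    moreover have "\<Psi> (y a') = a'" if a': "a' \<in> S" for a'
    proof -
      have yR: "y a' \<in> Rn n" using insert a' by auto
      have "sqd n a' z = sqd n a' a"
        using iso yR ya fx a' insert.prems(3) unfolding z_def by (metis insertCI)
      then show ?thesis unfolding \<Psi>_def using fx a' rfl_fix by simp
    qed
    ultimately show ?thesis by auto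
  qed
qed

definition rot :: "nat \<Rightarrow> (nat \<Rightarrow> real) \<Rightarrow> (nat \<Rightarrow> real) \<Rightarrow> (nat \<Rightarrow> real)" where
  "rot B th x = (\<lambda>i. if i < 2*B then
      (if even i then cos (th (i div 2)) * x i - sin (th (i div 2)) * x (Suc i)
       else sin (th (i div 2)) * x (i - 1) + cos (th (i div 2)) * x i) else x i)"

lemma rot_rot: "rot B th (rot B th' x) = rot B (\<lambda>b. th b + th' b) x"
proof
  fix i
  show "rot B th (rot B th' x) i = rot B (\<lambda>b. th b + th' b) x i"
  proof (cases "i < 2*B")
    case True
    show ?thesis
    proof (cases "even i")
      case True
      then have "Suc i < 2*B" "odd (Suc i)" "Suc i div 2 = i div 2" using \<open>i < 2*B\<close>
        by (auto elim!: evenE)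
      then show ?thesis using True \<open>i < 2*B\<close>
        by (simp add: rot_def cos_add sin_add algebra_simps)
    next
      case False
      then have "i - 1 < 2*B" "even (i - 1)" "(i - 1) div 2 = i div 2" "Suc (i - 1) = i" using \<open>i < 2*B\<close>
        by (auto elim!: oddE)
      then show ?thesis using False \<open>i < 2*B\<close>
        by (simp add: rot_def cos_add sin_add algebra_simps)
    qed
  next
    case False then show ?thesis by (simp add: rot_def)
  qed
qed

lemma rot_zero: "rot B (\<lambda>_. 0) x = x"
  by (auto simp: rot_def)

lemma rot_periodic:
  assumes "\<And>b. b < B \<Longrightarrow> \<exists>m::int. th b = th' b + 2 * pi * of_int m"
  shows "rot B th = rot B th'"
proof -
  have cs: "cos (th b) = cos (th' b) \<and> sin (th b) = sin (th' b)" if bB: "b < B" for b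
  proof -
    obtain m::int where "th b = th' b + 2 * pi * of_int m" using assms[OF bB] by blast
    then show ?thesis by (simp add: cos_add sin_add)
  qed
  show ?thesis
  proof (rule ext, rule ext)
    fix x i
    show "rot B th x i = rot B th' x i"
    proof (cases "i < 2*B")
      case True
      then have "i div 2 < B" by auto
      then show ?thesis using cs[of "i div 2"] by (simp add: rot_def)
    qed (simp add: rot_def)
  qed
qed

lemma rot_Rn: "x \<in> Rn n \<Longrightarrow> 2*B \<le> n \<Longrightarrow> rot B th x \<in> Rn n"
  by (auto simp: Rn_def rot_def)

lemma sum_pairs: "(\<Sum>i<2*B. h (i::nat)) = (\<Sum>b<B. h (2*b) + h (Suc (2*b)))"
  by (induction B) (auto simp: sum.distrib algebra_simps)

lemma sum_split_dim:
  fixes m n :: nat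
  assumes "m \<le> n"
  shows "(\<Sum>i<n. h i) = (\<Sum>i<m. h i) + (\<Sum>i\<in>{m..<n}. h i)"
proof -
  have e: "{..<n} = {..<m} \<union> {m..<n}" using assms by auto
  show ?thesis unfolding e by (rule sum.union_disjoint) auto
qed

lemma rot_isom:
  assumes "2*B \<le> n"
  shows "sqd n (rot B th x) (rot B th y) = sqd n x y"
proof -
  have blk: "(rot B th x (2*b) - rot B th y (2*b))^2 + (rot B th x (Suc (2*b)) - rot B th y (Suc (2*b)))^2
      = (x (2*b) - y (2*b))^2 + (x (Suc (2*b)) - y (Suc (2*b)))^2" if "b < B" for b
  proof -
    let ?c = "cos (th b)" and ?s = "sin (th b)"
    have e: "rot B th z (2*b) = ?c * z (2*b) - ?s * z (Suc (2*b))"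
      "rot B th z (Suc (2*b)) = ?s * z (2*b) + ?c * z (Suc (2*b))" for z
      using that by (auto simp: rot_def)
    have cs: "?c^2 + ?s^2 = 1" by simp
    have id: "(c * a - z * b)^2 + (z * a + c * b)^2 = (c^2+z^2)*(a^2+b^2)" for c z a b :: real
      by (simp add: power2_eq_square algebra_simps)
    have "(rot B th x (2*b) - rot B th y (2*b))^2 + (rot B th x (Suc (2*b)) - rot B th y (Suc (2*b)))^2
      = (?c*(x (2*b) - y (2*b)) - ?s*(x (Suc (2*b)) - y (Suc (2*b))))^2 + (?s*(x (2*b) - y (2*b)) + ?c*(x (Suc (2*b)) - y (Suc (2*b))))^2"
      unfolding e by (simp add: algebra_simps)
    also have "\<dots> = (x (2*b) - y (2*b))^2 + (x (Suc (2*b)) - y (Suc (2*b)))^2"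
      unfolding id cs by simp
    finally show ?thesis .
  qed
  have "sqd n (rot B th x) (rot B th y) = (\<Sum>i<2*B. (rot B th x i - rot B th y i)^2) + (\<Sum>i\<in>{2*B..<n}. (rot B th x i - rot B th y i)^2)"
    unfolding sqd_def by (rule sum_split_dim[OF assms])
  also have "(\<Sum>i<2*B. (rot B th x i - rot B th y i)^2) = (\<Sum>i<2*B. (x i - y i)^2)"
    unfolding sum_pairs by (rule sum.cong) (auto simp: blk)
  also have "(\<Sum>i\<in>{2*B..<n}. (rot B th x i - rot B th y i)^2) = (\<Sum>i\<in>{2*B..<n}. (x i - y i)^2)"
    by (rule sum.cong) (auto simp: rot_def)
  also have "(\<Sum>i<2*B. (x i - y i)^2) + (\<Sum>i\<in>{2*B..<n}. (x i - y i)^2) = sqd n x y"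
    unfolding sqd_def by (rule sum_split_dim[OF assms, symmetric])
  finally show ?thesis .
qed

definition x0v :: "nat \<Rightarrow> (nat \<Rightarrow> real) \<Rightarrow> (nat \<Rightarrow> real)" where
  "x0v B r = (\<lambda>i. if i < 2*B \<and> even i then r (i div 2) else 0)"

lemma x0v_Rn: "2*B \<le> n \<Longrightarrow> x0v B r \<in> Rn n"
  by (auto simp: Rn_def x0v_def)

lemma rot_x0:
  assumes "2*B \<le> n"
  shows "sqd n (rot B th (x0v B r)) (rot B th' (x0v B r)) = (\<Sum>b<B. (r b)^2 * (2 - 2 * cos (th b - th' b)))"
proof -
  have blk: "(rot B th (x0v B r) (2*b) - rot B th' (x0v B r) (2*b))^2 + (rot B th (x0v B r) (Suc (2*b)) - rot B th' (x0v B r) (Suc (2*b)))^2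
      = (r b)^2 * (2 - 2 * cos (th b - th' b))" if "b < B" for b
  proof -
    have e: "rot B t (x0v B r) (2*b) = cos (t b) * r b"
      "rot B t (x0v B r) (Suc (2*b)) = sin (t b) * r b" for t
      using that by (auto simp: rot_def x0v_def)
    have c1: "(cos (th b))^2 + (sin (th b))^2 = 1" "(cos (th' b))^2 + (sin (th' b))^2 = 1" by simp_all
    have id: "(ca * r' - cb * r')^2 + (za * r' - zb * r')^2 = r'^2 * ((ca^2+za^2) + (cb^2+zb^2) - 2*(ca * cb + za * zb))" for ca cb za zb r' :: real
      by (simp add: power2_eq_square algebra_simps)
    show ?thesis unfolding e cos_diff id c1 by simp
  qed
  have "sqd n (rot B th (x0v B r)) (rot B th' (x0v B r)) = (\<Sum>i<2*B. (rot B th (x0v B r) i - rot B th' (x0v B r) i)^2) + (\<Sum>i\<in>{2*B..<n}. (rot B th (x0v B r) i - rot B th' (x0v B r) i)^2)"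
    unfolding sqd_def by (rule sum_split_dim[OF assms])
  also have "(\<Sum>i\<in>{2*B..<n}. (rot B th (x0v B r) i - rot B th' (x0v B r) i)^2) = 0"
    by (rule sum.neutral) (auto simp: rot_def x0v_def)
  also have "(\<Sum>i<2*B. (rot B th (x0v B r) i - rot B th' (x0v B r) i)^2) = (\<Sum>b<B. (r b)^2 * (2 - 2 * cos (th b - th' b)))"
    unfolding sum_pairs by (rule sum.cong) (auto simp: blk)
  finally show ?thesis by simp
qed

lemma group_actionI':
  assumes grp: "group G"
    and ext: "\<And>g. g \<in> carrier G \<Longrightarrow> \<rho> g \<in> extensional E"
    and into: "\<And>g x. g \<in> carrier G \<Longrightarrow> x \<in> E \<Longrightarrow> \<rho> g x \<in> E"
    and mul: "\<And>g h x. g \<in> carrier G \<Longrightarrow> h \<in> carrier G \<Longrightarrow> x \<in> E \<Longrightarrow> \<rho> (g \<otimes>\<^bsub>G\<^esub> h) x = \<rho> g (\<rho> h x)"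
    and one: "\<And>x. x \<in> E \<Longrightarrow> \<rho> \<one>\<^bsub>G\<^esub> x = x"
  shows "group_action G E \<rho>"
proof -
  have bij: "\<rho> g \<in> Bij E" if g: "g \<in> carrier G" for g
  proof -
    have ig: "inv\<^bsub>G\<^esub> g \<in> carrier G" using grp g by (simp add: group.inv_closed)
    have "bij_betw (\<rho> g) E E"
    proof (rule bij_betw_byWitness[where f'="\<rho> (inv\<^bsub>G\<^esub> g)"])
      show "\<forall>x\<in>E. \<rho> (inv\<^bsub>G\<^esub> g) (\<rho> g x) = x"
        using mul[OF ig g] one grp g by (simp add: group.l_inv)
      show "\<forall>x\<in>E. \<rho> g (\<rho> (inv\<^bsub>G\<^esub> g) x) = x"
        using mul[OF g ig] one grp g by (simp add: group.r_inv)
      show "\<rho> g ` E \<subseteq> E" using into g by auto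
      show "\<rho> (inv\<^bsub>G\<^esub> g) ` E \<subseteq> E" using into ig by auto
    qed
    then show ?thesis using ext g by (simp add: Bij_def)
  qed
  have hom: "\<rho> \<in> hom G (BijGroup E)"
  proof -
    have "\<rho> (g \<otimes>\<^bsub>G\<^esub> h) = \<rho> g \<otimes>\<^bsub>BijGroup E\<^esub> \<rho> h" if "g \<in> carrier G" "h \<in> carrier G" for g h
    proof -
      have gh: "g \<otimes>\<^bsub>G\<^esub> h \<in> carrier G" using grp that by (simp add: group.is_monoid monoid.m_closed)
      have "\<rho> (g \<otimes>\<^bsub>G\<^esub> h) = compose E (\<rho> g) (\<rho> h)"
      proof
        fix x show "\<rho> (g \<otimes>\<^bsub>G\<^esub> h) x = compose E (\<rho> g) (\<rho> h) x"
          using mul[OF that] ext[OF gh] by (cases "x \<in> E") (auto simp: compose_def extensional_def)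
      qed
      then show ?thesis using bij that by (simp add: BijGroup_def)
    qed
    then show ?thesis using bij by (auto simp: hom_def BijGroup_def)
  qed
  show ?thesis
    by (intro group_action.intro group_hom.intro group_hom_axioms.intro grp group_BijGroup hom)
qed

lemma conj_action:
  assumes ga: "group_action G E \<rho>" and bij: "bij_betw \<Phi> E E"
  shows "group_action G E (\<lambda>g. \<lambda>x\<in>E. \<Phi> (\<rho> g (inv_into E \<Phi> x)))"
proof (rule group_actionI')
  show grp: "group G" using ga by (simp add: group_action_def group_hom_def)
  have inv_in: "inv_into E \<Phi> x \<in> E" if "x \<in> E" for x
    using bij that by (metis bij_betw_def inv_into_into)
  have ff: "inv_into E \<Phi> (\<Phi> y) = y" if "y \<in> E" for y
    using bij that by (simp add: bij_betw_def inv_into_f_f)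
  have fi: "\<Phi> (inv_into E \<Phi> x) = x" if "x \<in> E" for x
    using bij that by (simp add: bij_betw_def f_inv_into_f)
  have PhiE: "\<Phi> y \<in> E" if "y \<in> E" for y using bij that by (auto simp: bij_betw_def)
  have rE: "\<rho> g y \<in> E" if "g \<in> carrier G" "y \<in> E" for g y
    using group_action.element_image[OF ga that] by blast
  show "(\<lambda>x\<in>E. \<Phi> (\<rho> g (inv_into E \<Phi> x))) \<in> extensional E" for g by simp
  show "(\<lambda>x\<in>E. \<Phi> (\<rho> g (inv_into E \<Phi> x))) x \<in> E" if "g \<in> carrier G" "x \<in> E" for g x
    using that by (simp add: PhiE rE inv_in)
  show "(\<lambda>x\<in>E. \<Phi> (\<rho> (g \<otimes>\<^bsub>G\<^esub> h) (inv_into E \<Phi> x))) x =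
        (\<lambda>x\<in>E. \<Phi> (\<rho> g (inv_into E \<Phi> x))) ((\<lambda>x\<in>E. \<Phi> (\<rho> h (inv_into E \<Phi> x))) x)"
    if "g \<in> carrier G" "h \<in> carrier G" "x \<in> E" for g h x
    using that by (simp add: PhiE rE inv_in ff group_action.composition_rule[OF ga])
  show "(\<lambda>x\<in>E. \<Phi> (\<rho> \<one>\<^bsub>G\<^esub> (inv_into E \<Phi> x))) x = x" if "x \<in> E" for x
  proof -
    have "\<rho> \<one>\<^bsub>G\<^esub> (inv_into E \<Phi> x) = inv_into E \<Phi> x"
      using group_action.id_eq_one[OF ga, symmetric] inv_in[OF that] by simp
    then show ?thesis using that fi by simp
  qed
qed

definition fp :: "nat \<Rightarrow> int \<Rightarrow> real" where
  "fp p s = 2 - 2 * cos (2 * pi * of_int s / real p)"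

definition realizable :: "nat \<Rightarrow> (nat \<Rightarrow> real) set \<Rightarrow> ((nat \<Rightarrow> real) \<Rightarrow> (nat \<Rightarrow> real) \<Rightarrow> real) \<Rightarrow> bool" where
  "realizable p A P \<longleftrightarrow> (\<exists>(B::nat) c w. (\<forall>b<B. 0 \<le> (w b :: real)) \<and>
      (\<forall>a\<in>A. \<forall>a'\<in>A. P a a' = (\<Sum>b<B. w b * fp p (c b a - c b a'))))"

lemma group_p_torus: "group (p_torus p \<alpha>)"
  by (simp add: p_torus_def)

lemma carrier_p_torus: "p \<noteq> 0 \<Longrightarrow> carrier (p_torus p \<alpha>) = (\<Pi>\<^sub>E l\<in>{..<\<alpha>}. {0..<int p})"
  by (simp add: p_torus_def carrier_integer_mod_group)

lemma mult_p_torus: "p \<noteq> 0 \<Longrightarrow> g \<otimes>\<^bsub>p_torus p \<alpha>\<^esub> h = (\<lambda>l\<in>{..<\<alpha>}. (g l + h l) mod int p)"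
  by (simp add: p_torus_def integer_mod_group_def)

lemma one_p_torus: "p \<noteq> 0 \<Longrightarrow> \<one>\<^bsub>p_torus p \<alpha>\<^esub> = (\<lambda>l\<in>{..<\<alpha>}. 0)"
  by (simp add: p_torus_def integer_mod_group_def)

lemma rep_toral:
  assumes p: "prime p" and fin: "finite A" and Ak: "A \<subseteq> Rn k"
    and R: "realizable p A (\<lambda>a a'. sqd k a a')"
  shows "euclidean_sub_p_toral p k A"
proof -
  obtain B :: nat and c w where w: "\<forall>b<B. 0 \<le> (w b :: real)"
    and cw: "\<forall>a\<in>A. \<forall>a'\<in>A. sqd k a a' = (\<Sum>b<B. w b * fp p (c b a - c b a'))"
    using R unfolding realizable_def by blast
  have p2: "2 \<le> p" using p by (simp add: prime_ge_2_nat)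
  then have p0: "p \<noteq> 0" by simp
  define N where "N = card A"
  define \<alpha> where "\<alpha> = Suc N"
  obtain idx where idx: "bij_betw idx A {0..<N}" using ex_bij_betw_finite_nat[OF fin] N_def by blast
  define G where "G = p_torus p \<alpha>"
  define C where "C b l = (if l < N then c b (inv_into A idx l) else 0)" for b l
  define chr where "chr b g = (\<Sum>l<\<alpha>. C b l * g l)" for b and g :: "nat \<Rightarrow> int"
  define \<theta> where "\<theta> g b = 2 * pi * of_int (chr b g) / real p" for g b
  define n where "n = max k (2*B)"
  define E where "E = Rn n"
  define \<rho> where "\<rho> g = (\<lambda>x\<in>E. rot B (\<theta> g) x)" for g
  have kn: "k \<le> n" and Bn: "2*B \<le> n" by (auto simp: n_def)
  have carG: "carrier G = (\<Pi>\<^sub>E l\<in>{..<\<alpha>}. {0..<int p})" by (simp add: G_def carrier_p_torus p0)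
  have theta_mul: "\<exists>m::int. \<theta> (g \<otimes>\<^bsub>G\<^esub> h) b = \<theta> g b + \<theta> h b + 2 * pi * of_int m"
    if g: "g \<in> carrier G" and h: "h \<in> carrier G" for g h b
  proof -
    define K where "K = (\<Sum>l<\<alpha>. C b l * ((g l + h l) div int p))"
    have "chr b (g \<otimes>\<^bsub>G\<^esub> h) = (\<Sum>l<\<alpha>. C b l * ((g l + h l) mod int p))"
      unfolding chr_def G_def mult_p_torus[OF p0] by (rule sum.cong) auto
    also have "\<dots> = (\<Sum>l<\<alpha>. C b l * g l + C b l * h l - int p * (C b l * ((g l + h l) div int p)))"
      by (rule sum.cong) (auto simp: minus_div_mult_eq_mod[symmetric] algebra_simps)
    also have "\<dots> = chr b g + chr b h - int p * K"
      by (simp add: chr_def K_def sum_subtractf sum.distrib sum_distrib_left)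
    finally have e: "chr b (g \<otimes>\<^bsub>G\<^esub> h) = chr b g + chr b h - int p * K" .
    show ?thesis
      by (rule exI[of _ "-K"]) (use p0 in \<open>simp add: \<theta>_def e field_simps\<close>)
  qed
  have ga: "group_action G E \<rho>"
  proof (rule group_actionI')
    show "group G" by (simp add: G_def group_p_torus)
    show "\<rho> g \<in> extensional E" for g by (simp add: \<rho>_def)
    show "\<rho> g x \<in> E" if "x \<in> E" for g x using that Bn by (simp add: \<rho>_def E_def rot_Rn)
    show "\<rho> (g \<otimes>\<^bsub>G\<^esub> h) x = \<rho> g (\<rho> h x)" if "g \<in> carrier G" "h \<in> carrier G" "x \<in> E" for g h x
    proof -
      have "rot B (\<theta> (g \<otimes>\<^bsub>G\<^esub> h)) = rot B (\<lambda>b. \<theta> g b + \<theta> h b)"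
        by (rule rot_periodic) (use theta_mul[OF that(1,2)] in auto)
      then show ?thesis using that Bn by (simp add: \<rho>_def E_def rot_Rn rot_rot)
    qed
    show "\<rho> \<one>\<^bsub>G\<^esub> x = x" if "x \<in> E" for x
    proof -
      have "\<theta> \<one>\<^bsub>G\<^esub> = (\<lambda>_. 0)"
        by (auto simp: \<theta>_def chr_def G_def one_p_torus[OF p0])
      then show ?thesis using that by (simp add: \<rho>_def rot_zero)
    qed
  qed
  have iso: "sqd n (\<rho> g x) (\<rho> g y) = sqd n x y" if "x \<in> E" "y \<in> E" for g x y
    using that Bn by (simp add: \<rho>_def rot_isom)
  define e where "e a = (\<lambda>l\<in>{..<\<alpha>}. if l = idx a then (1::int) else 0)" for a
  have idxA: "idx a < N" "inv_into A idx (idx a) = a" if "a \<in> A" for a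
    using idx that by (auto simp: bij_betw_def inv_into_f_f)
  have eG: "e a \<in> carrier G" for a using p2 by (auto simp: carG e_def)
  have chi_e: "chr b (e a) = c b a" if "a \<in> A" for a b
  proof -
    have "chr b (e a) = (\<Sum>l<\<alpha>. (if l = idx a then C b l else 0))"
      unfolding chr_def e_def by (rule sum.cong) auto
    also have "\<dots> = C b (idx a)" using idxA[OF that] by (simp add: \<alpha>_def)
    finally show ?thesis using idxA[OF that] by (simp add: C_def)
  qed
  define r where "r b = sqrt (w b)" for b
  define x0 where "x0 = x0v B r"
  have x0E: "x0 \<in> E" using Bn by (simp add: x0_def E_def x0v_Rn)
  define y where "y a = \<rho> (e a) x0" for a
  have yE: "y a \<in> E" for a using x0E Bn by (simp add: y_def \<rho>_def E_def rot_Rn)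
  have AE: "A \<subseteq> E" using Ak kn by (auto simp: E_def Rn_def)
  have ydist: "sqd n (y a) (y a') = sqd n a a'" if "a \<in> A" "a' \<in> A" for a a'
  proof -
    have "sqd n (y a) (y a') = (\<Sum>b<B. (r b)^2 * (2 - 2 * cos (\<theta> (e a) b - \<theta> (e a') b)))"
      using x0E Bn by (simp add: y_def \<rho>_def x0_def rot_x0)
    also have "\<dots> = (\<Sum>b<B. w b * fp p (c b a - c b a'))"
    proof (rule sum.cong)
      fix b assume "b \<in> {..<B}"
      then have "(r b)^2 = w b" using w by (simp add: r_def)
      moreover have "\<theta> (e a) b - \<theta> (e a') b = 2 * pi * of_int (c b a - c b a') / real p"
        using that by (simp add: \<theta>_def chi_e diff_divide_distrib algebra_simps)
      ultimately show "(r b)^2 * (2 - 2 * cos (\<theta> (e a) b - \<theta> (e a') b)) = w b * fp p (c b a - c b a')"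
        by (simp add: fp_def)
    qed simp
    also have "\<dots> = sqd k a a'" using cw that by simp
    also have "\<dots> = sqd n a a'" using that Ak kn by (metis sqd_mono_dim subsetD)
    finally show ?thesis .
  qed
  obtain \<Phi> where bij: "bij_betw \<Phi> E E" and Piso: "\<forall>x\<in>E. \<forall>z\<in>E. sqd n (\<Phi> x) (\<Phi> z) = sqd n x z"
    and Py: "\<forall>a\<in>A. \<Phi> (y a) = a"
    using congr_ext[of A n y] fin AE yE ydist unfolding E_def by blast
  define \<psi> where "\<psi> g = (\<lambda>x\<in>E. \<Phi> (\<rho> g (inv_into E \<Phi> x)))" for g
  have gpsi: "group_action G E \<psi>" unfolding \<psi>_def by (rule conj_action[OF ga bij])
  have inv_in: "inv_into E \<Phi> x \<in> E" if "x \<in> E" for x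
    using bij that by (metis bij_betw_def inv_into_into)
  have ff: "inv_into E \<Phi> (\<Phi> z) = z" if "z \<in> E" for z
    using bij that by (simp add: bij_betw_def inv_into_f_f)
  have fi: "\<Phi> (inv_into E \<Phi> x) = x" if "x \<in> E" for x
    using bij that by (simp add: bij_betw_def f_inv_into_f)
  have rhoE: "\<rho> g z \<in> E" if "z \<in> E" for g z using that Bn by (simp add: \<rho>_def E_def rot_Rn)
  have psi_iso: "edist n (\<psi> g x) (\<psi> g z) = edist n x z" if "x \<in> E" "z \<in> E" for g x z
  proof -
    have "sqd n (\<psi> g x) (\<psi> g z) = sqd n (\<rho> g (inv_into E \<Phi> x)) (\<rho> g (inv_into E \<Phi> z))"
      using that Piso by (simp add: \<psi>_def rhoE inv_in)
    also have "\<dots> = sqd n (inv_into E \<Phi> x) (inv_into E \<Phi> z)" using that by (simp add: iso inv_in)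
    also have "\<dots> = sqd n x z" using Piso inv_in that fi by metis
    finally show ?thesis by (simp add: edist_sqd)
  qed
  have PhiE: "\<Phi> x0 \<in> E" using bij x0E by (auto simp: bij_betw_def)
  have orb: "A \<subseteq> orbit G \<psi> (\<Phi> x0)"
  proof
    fix a assume a: "a \<in> A"
    have h1: "\<psi> (e a) (\<Phi> x0) = \<Phi> (y a)" using PhiE x0E by (simp add: \<psi>_def ff y_def)
    have "a = \<psi> (e a) (\<Phi> x0)" using h1 Py a by simp
    then show "a \<in> orbit G \<psi> (\<Phi> x0)" unfolding orbit_def using eG[of a] by blast
  qed
  have X1: "\<exists>x0'\<in>Rn n. A \<subseteq> orbit (p_torus p \<alpha>) \<psi> x0'" using PhiE orb by (auto simp: G_def E_def)
  have X2: "group_action (p_torus p \<alpha>) (Rn n) \<psi>" using gpsi by (simp add: G_def E_def)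
  have X3: "\<forall>g\<in>carrier (p_torus p \<alpha>). \<forall>x\<in>Rn n. \<forall>y\<in>Rn n. edist n (\<psi> g x) (\<psi> g y) = edist n x y"
    using psi_iso by (simp add: E_def)
  have X4: "1 \<le> \<alpha>" by (simp add: \<alpha>_def)
  show ?thesis unfolding euclidean_sub_p_toral_def using kn X1 X2 X3 X4 by blast
qed

lemma sum_lessThan_add_nat: "(\<Sum>b<m+n. F b) = (\<Sum>b<m. F b) + (\<Sum>b<n. F (m + b))" for F :: "nat \<Rightarrow> 'a::comm_monoid_add"
  by (induction n) (auto simp: add.assoc)

lemma real_zero: "realizable p A (\<lambda>_ _. 0)"
  unfolding realizable_def by (rule exI[of _ 0]) auto

lemma real_cong: "realizable p A P \<Longrightarrow> (\<And>a a'. a \<in> A \<Longrightarrow> a' \<in> A \<Longrightarrow> P a a' = Q a a') \<Longrightarrow> realizable p A Q"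
  unfolding realizable_def by metis

lemma real_single: "realizable p A (\<lambda>a a'. fp p (c a - c a'))"
  unfolding realizable_def by (rule exI[of _ 1], rule exI[of _ "\<lambda>_. c"], rule exI[of _ "\<lambda>_. 1"]) auto

lemma real_scale:
  assumes "realizable p A P" "0 \<le> t"
  shows "realizable p A (\<lambda>a a'. t * P a a')"
proof -
  obtain B :: nat and c w where w: "\<forall>b<B. 0 \<le> (w b :: real)"
    and cw: "\<forall>a\<in>A. \<forall>a'\<in>A. P a a' = (\<Sum>b<B. w b * fp p (c b a - c b a'))"
    using assms(1) unfolding realizable_def by blast
  show ?thesis unfolding realizable_def
    by (rule exI[of _ B], rule exI[of _ c], rule exI[of _ "\<lambda>b. t * w b"])
       (use w cw assms(2) in \<open>auto simp: sum_distrib_left mult.assoc\<close>)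
qed

lemma real_add:
  assumes "realizable p A P" "realizable p A Q"
  shows "realizable p A (\<lambda>a a'. P a a' + Q a a')"
proof -
  obtain B1 :: nat and c1 w1 where w1: "\<forall>b<B1. 0 \<le> (w1 b :: real)"
    and cw1: "\<forall>a\<in>A. \<forall>a'\<in>A. P a a' = (\<Sum>b<B1. w1 b * fp p (c1 b a - c1 b a'))"
    using assms(1) unfolding realizable_def by blast
  obtain B2 :: nat and c2 w2 where w2: "\<forall>b<B2. 0 \<le> (w2 b :: real)"
    and cw2: "\<forall>a\<in>A. \<forall>a'\<in>A. Q a a' = (\<Sum>b<B2. w2 b * fp p (c2 b a - c2 b a'))"
    using assms(2) unfolding realizable_def by blast
  define c where "c b = (if b < B1 then c1 b else c2 (b - B1))" for b
  define w where "w b = (if b < B1 then w1 b else w2 (b - B1))" for b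
  have "\<forall>b<B1+B2. 0 \<le> w b" using w1 w2 by (auto simp: w_def)
  moreover have "\<forall>a\<in>A. \<forall>a'\<in>A. P a a' + Q a a' = (\<Sum>b<B1+B2. w b * fp p (c b a - c b a'))"
    using cw1 cw2 by (simp add: sum_lessThan_add_nat c_def w_def)
  ultimately show ?thesis unfolding realizable_def by blast
qed

lemma real_sum:
  assumes "finite I" "\<And>i. i \<in> I \<Longrightarrow> realizable p A (P i)"
  shows "realizable p A (\<lambda>a a'. \<Sum>i\<in>I. P i a a')"
  using assms
proof (induction I rule: finite_induct)
  case empty
  then show ?case by (simp add: real_zero)
next
  case (insert i I)
  then have "realizable p A (\<lambda>a a'. P i a a' + (\<Sum>i\<in>I. P i a a'))"
    by (intro real_add) auto
  then show ?case using insert by simp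
qed

lemma usum:
  assumes "finite A" "a \<in> A" "a' \<in> A" "a \<noteq> a'"
  shows "(\<Sum>x\<in>A. (if x = a \<or> x = a' then 1 else 0) * g x) = g a + (g a' :: real)"
proof -
  have "(\<Sum>x\<in>A. (if x = a \<or> x = a' then 1 else 0) * g x) = (\<Sum>x\<in>A. (if x \<in> {a,a'} then g x else 0))"
    by (rule sum.cong) auto
  also have "\<dots> = (\<Sum>x\<in>A \<inter> {a,a'}. g x)" using assms(1) by (simp add: sum.inter_restrict)
  also have "A \<inter> {a,a'} = {a,a'}" using assms by auto
  finally show ?thesis using assms by simp
qed

lemma fp_zero[simp]: "fp p 0 = 0" by (simp add: fp_def)
lemma fp_neg: "fp p (- s) = fp p s" by (simp add: fp_def)

lemma ind2_fp: fixes a a' x y :: "nat \<Rightarrow> real"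
  assumes "x \<noteq> y" "a \<noteq> a'"
  shows "fp p ((if a = x \<or> a = y then 1 else 0) - (if a' = x \<or> a' = y then 1 else 0))
     = fp p 1 * ((if x = a \<or> x = a' then 1 else 0) + (if y = a \<or> y = a' then 1 else 0) - 2 * (if x = a \<or> x = a' then 1 else 0) * (if y = a \<or> y = a' then 1 else 0))"
  using assms by (cases "x = a"; cases "x = a'"; cases "y = a"; cases "y = a'") (simp_all add: fp_neg)

lemma ind1_fp: fixes a a' x :: "nat \<Rightarrow> real"
  assumes "a \<noteq> a'"
  shows "fp p ((if a = x then 1 else 0) - (if a' = x then 1 else 0)) = fp p 1 * (if x = a \<or> x = a' then 1 else 0)"
  using assms by (cases "x = a"; cases "x = a'") (simp_all add: fp_neg)

lemma swap_sym: fixes A :: "'a set" and \<nu> :: "'a \<Rightarrow> 'a \<Rightarrow> real"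
  assumes "\<And>x y. x \<in> A \<Longrightarrow> y \<in> A \<Longrightarrow> \<nu> x y = \<nu> y x"
  shows "(\<Sum>x\<in>A. \<Sum>y\<in>A. \<nu> x y * U y) = (\<Sum>y\<in>A. U y * (\<Sum>x\<in>A. \<nu> y x))"
proof -
  have "(\<Sum>x\<in>A. \<Sum>y\<in>A. \<nu> x y * U y) = (\<Sum>y\<in>A. \<Sum>x\<in>A. \<nu> x y * U y)" by (rule sum.swap)
  also have "\<dots> = (\<Sum>y\<in>A. U y * (\<Sum>x\<in>A. \<nu> y x))"
    by (rule sum.cong[OF refl]) (simp add: sum_distrib_left assms mult.commute)
  finally show ?thesis .
qed

lemma fp1_pos: assumes "2 \<le> p" shows "0 < fp p 1"
proof -
  have "2 * pi / real p \<le> pi" using assms by (simp add: field_simps)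
  moreover have "0 < 2 * pi / real p" using assms by simp
  ultimately have "cos (2 * pi / real p) < cos 0" by (intro cos_monotone_0_pi) auto
  then show ?thesis by (simp add: fp_def)
qed

lemma cut_box:
  fixes E :: "(nat \<Rightarrow> real) \<Rightarrow> (nat \<Rightarrow> real) \<Rightarrow> real"
  assumes fin: "finite A" and p: "2 \<le> p"
    and sym: "\<And>a a'. a \<in> A \<Longrightarrow> a' \<in> A \<Longrightarrow> E a a' = E a' a"
    and diag: "\<And>a. a \<in> A \<Longrightarrow> E a a = 0"
    and box: "\<And>a a'. a \<in> A \<Longrightarrow> a' \<in> A \<Longrightarrow> a \<noteq> a' \<Longrightarrow> \<bar>E a a' - \<beta>\<bar> \<le> \<gamma>"
    and cond: "(2 * real (card A) - 3) * \<gamma> \<le> \<beta>" and g0: "0 \<le> \<gamma>"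
  shows "realizable p A E"
proof -
  define f1 where "f1 = fp p 1"
  have f1: "0 < f1" using fp1_pos[OF p] by (simp add: f1_def)
  define K where "K = \<beta> + \<gamma>"
  define \<nu> where "\<nu> x y = (if x = y then 0 else (K - E x y) / 4)" for x y
  define R where "R x = (\<Sum>y\<in>A. \<nu> x y)" for x
  define lam where "lam x = K / 2 - 2 * R x" for x
  define ind where "ind (x::nat\<Rightarrow>real) = (\<lambda>z. if z = x then 1 else (0::int))" for x
  define ind2 where "ind2 (x::nat\<Rightarrow>real) (y::nat\<Rightarrow>real) = (\<lambda>z. if z = x \<or> z = y then 1 else (0::int))" for x y
  have nu_nn: "0 \<le> \<nu> x y" if "x \<in> A" "y \<in> A" for x y
    using box[OF that] by (auto simp: \<nu>_def K_def abs_le_iff)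
  have nu_sym: "\<nu> x y = \<nu> y x" if "x \<in> A" "y \<in> A" for x y
    using sym[OF that] by (auto simp: \<nu>_def)
  have R_le: "R x \<le> (real (card A) - 1) * \<gamma> / 2" if x: "x \<in> A" for x
  proof -
    have "R x = (\<Sum>y\<in>A - {x}. \<nu> x y)" unfolding R_def using fin x
      by (simp add: sum.remove \<nu>_def)
    also have "\<dots> \<le> (\<Sum>y\<in>A - {x}. \<gamma> / 2)"
    proof (rule sum_mono)
      fix y assume y: "y \<in> A - {x}"
      have "\<beta> - E x y \<le> \<gamma>" using box[of x y] x y by (auto simp: abs_le_iff)
      then show "\<nu> x y \<le> \<gamma> / 2" using y by (auto simp: \<nu>_def K_def)
    qed
    also have "\<dots> = (real (card A) - 1) * \<gamma> / 2" using fin x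
    proof -
      have c1: "card (A - {x}) = card A - 1" using fin x by (simp add: card_Diff_singleton)
      have c2: "1 \<le> card A" using fin x by (metis card_0_eq empty_iff less_one not_le)
      have "real (card (A - {x})) = real (card A) - 1" using c1 c2 by (simp add: of_nat_diff)
      then show ?thesis by simp
    qed
    finally show ?thesis .
  qed
  have lam_nn: "0 \<le> lam x" if "x \<in> A" for x
    using R_le[OF that] cond by (simp add: lam_def K_def algebra_simps)
  define P1 where "P1 a a' = (\<Sum>x\<in>A. (lam x / f1) * fp p (ind x a - ind x a'))" for a a'
  define P2 where "P2 a a' = (\<Sum>x\<in>A. \<Sum>y\<in>A. (\<nu> x y / f1) * fp p (ind2 x y a - ind2 x y a'))" for a a'
  have r1: "realizable p A P1" unfolding P1_def
  proof (rule real_sum[OF fin])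
    fix x assume x: "x \<in> A"
    show "realizable p A (\<lambda>a a'. (lam x / f1) * fp p (ind x a - ind x a'))"
      by (rule real_scale[OF real_single]) (use lam_nn[OF x] f1 in simp)
  qed
  have r2: "realizable p A P2" unfolding P2_def
  proof (rule real_sum[OF fin])
    fix x assume x: "x \<in> A"
    show "realizable p A (\<lambda>a a'. \<Sum>y\<in>A. (\<nu> x y / f1) * fp p (ind2 x y a - ind2 x y a'))"
    proof (rule real_sum[OF fin])
      fix y assume y: "y \<in> A"
      show "realizable p A (\<lambda>a a'. (\<nu> x y / f1) * fp p (ind2 x y a - ind2 x y a'))"
        by (rule real_scale[OF real_single]) (use nu_nn[OF x y] f1 in simp)
    qed
  qed
  have "realizable p A (\<lambda>a a'. P1 a a' + P2 a a')" by (rule real_add[OF r1 r2])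
  then show ?thesis
  proof (rule real_cong)
    fix a a' assume a: "a \<in> A" and a': "a' \<in> A"
    show "P1 a a' + P2 a a' = E a a'"
    proof (cases "a = a'")
      case True then show ?thesis by (simp add: P1_def P2_def diag a')
    next
      case ne: False
      define U where "U x = (if x = a \<or> x = a' then 1 else (0::real))" for x
      have e1: "fp p (ind x a - ind x a') = f1 * U x" for x
        unfolding ind_def U_def f1_def by (rule ind1_fp[OF ne])
      have e2: "\<nu> x y * fp p (ind2 x y a - ind2 x y a') = f1 * (\<nu> x y * (U x + U y - 2 * U x * U y))" for x y
      proof (cases "x = y")
        case True then show ?thesis by (simp add: \<nu>_def)
      next
        case False
        show ?thesis unfolding ind2_def U_def f1_def ind2_fp[OF False ne] by simp
      qed
      have us: "(\<Sum>x\<in>A. U x * g x) = g a + g a'" for g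
        unfolding U_def by (rule usum[OF fin a a' ne])
      have "P1 a a' = (\<Sum>x\<in>A. U x * lam x)"
        unfolding P1_def using f1 by (intro sum.cong) (auto simp: e1)
      also have "\<dots> = lam a + lam a'" by (rule us)
      finally have h1: "P1 a a' = lam a + lam a'" .
      have "P2 a a' = (\<Sum>x\<in>A. \<Sum>y\<in>A. \<nu> x y * (U x + U y - 2 * U x * U y))"
        unfolding P2_def
      proof (intro sum.cong refl)
        fix x y
        have "(\<nu> x y / f1) * fp p (ind2 x y a - ind2 x y a') = (\<nu> x y * fp p (ind2 x y a - ind2 x y a')) / f1"
          by simp
        also have "\<dots> = \<nu> x y * (U x + U y - 2 * U x * U y)" unfolding e2 using f1 by simp
        finally show "(\<nu> x y / f1) * fp p (ind2 x y a - ind2 x y a') = \<nu> x y * (U x + U y - 2 * U x * U y)" .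
      qed
      also have "\<dots> = (\<Sum>x\<in>A. U x * R x + (\<Sum>y\<in>A. \<nu> x y * U y) - 2 * (U x * (\<Sum>y\<in>A. \<nu> x y * U y)))"
      proof (rule sum.cong[OF refl])
        fix x
        have "(\<Sum>y\<in>A. \<nu> x y * (U x + U y - 2 * U x * U y))
            = (\<Sum>y\<in>A. U x * \<nu> x y + \<nu> x y * U y - 2 * (U x * (\<nu> x y * U y)))"
          by (rule sum.cong) (simp_all add: algebra_simps)
        also have "\<dots> = (\<Sum>y\<in>A. U x * \<nu> x y) + (\<Sum>y\<in>A. \<nu> x y * U y) - (\<Sum>y\<in>A. 2 * (U x * (\<nu> x y * U y)))"
          by (simp only: sum.distrib sum_subtractf)
        also have "\<dots> = U x * R x + (\<Sum>y\<in>A. \<nu> x y * U y) - 2 * (U x * (\<Sum>y\<in>A. \<nu> x y * U y))"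
          by (simp only: sum_distrib_left R_def)
        finally show "(\<Sum>y\<in>A. \<nu> x y * (U x + U y - 2 * U x * U y)) = U x * R x + (\<Sum>y\<in>A. \<nu> x y * U y) - 2 * (U x * (\<Sum>y\<in>A. \<nu> x y * U y))" .
      qed
      also have "\<dots> = (\<Sum>x\<in>A. U x * R x) + (\<Sum>x\<in>A. \<Sum>y\<in>A. \<nu> x y * U y) - 2 * (\<Sum>x\<in>A. U x * (\<Sum>y\<in>A. \<nu> x y * U y))"
        by (simp only: sum.distrib sum_subtractf sum_distrib_left)
      also have "(\<Sum>x\<in>A. \<Sum>y\<in>A. \<nu> x y * U y) = (\<Sum>y\<in>A. U y * R y)"
        unfolding R_def by (rule swap_sym) (simp add: nu_sym)
      also have "(\<Sum>x\<in>A. U x * (\<Sum>y\<in>A. \<nu> x y * U y)) = (\<Sum>x\<in>A. U x * (\<nu> x a + \<nu> x a'))"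
        by (rule sum.cong) (auto simp: us mult.commute)
      also have "\<dots> = (\<nu> a a + \<nu> a a') + (\<nu> a' a + \<nu> a' a')" by (rule us)
      finally have h2: "P2 a a' = 2 * (R a + R a') - 2 * (\<nu> a a' + \<nu> a' a)"
        by (simp add: us \<nu>_def)
      show ?thesis using h1 h2 ne sym[OF a a'] by (simp add: lam_def \<nu>_def K_def field_simps)
    qed
  qed
qed

definition ipk :: "nat \<Rightarrow> (nat \<Rightarrow> real) \<Rightarrow> (nat \<Rightarrow> real) \<Rightarrow> real" where
  "ipk k x y = (\<Sum>i<k. x i * y i)"

lemma ipk_sym: "ipk k x y = ipk k y x"
  by (simp add: ipk_def mult.commute)

lemma ipk_lin: "ipk k (\<lambda>i. \<Sum>j\<in>J. c j * f j i) y = (\<Sum>j\<in>J. c j * ipk k (f j) y)"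
proof -
  have "ipk k (\<lambda>i. \<Sum>j\<in>J. c j * f j i) y = (\<Sum>i<k. \<Sum>j\<in>J. c j * (f j i * y i))"
    by (simp add: ipk_def sum_distrib_right mult.assoc)
  also have "\<dots> = (\<Sum>j\<in>J. \<Sum>i<k. c j * (f j i * y i))" by (rule sum.swap)
  also have "\<dots> = (\<Sum>j\<in>J. c j * ipk k (f j) y)" by (simp add: ipk_def sum_distrib_left)
  finally show ?thesis .
qed

lemma ipk_diff: "ipk k (\<lambda>i. x i - z i) y = ipk k x y - ipk k z y"
  by (simp add: ipk_def left_diff_distrib sum_subtractf)

lemma ipk_scale: "ipk k (\<lambda>i. t * x i) y = t * ipk k x y"
  by (simp add: ipk_def sum_distrib_left mult.assoc)

lemma ipk_divide: "ipk k (\<lambda>i. x i / t) y = ipk k x y / t"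
  by (simp add: ipk_def sum_divide_distrib)

lemma ipk_pos:
  assumes "x \<in> Rn k" "x i \<noteq> 0" shows "0 < ipk k x x"
proof -
  have "i < k" by (rule ccontr) (use assms in \<open>auto simp: Rn_def\<close>)
  show ?thesis unfolding ipk_def
    by (rule sum_pos2[of _ i]) (use assms \<open>i < k\<close> in \<open>auto simp: zero_less_mult_iff\<close>)
qed

lemma delta_sum: "finite I \<Longrightarrow> j0 \<in> I \<Longrightarrow> (\<Sum>j\<in>I. g j * (if j = j0 then 1 else 0)) = (g j0 :: real)"
  by (simp add: if_distrib[where f="\<lambda>x. _ * x"] cong: if_cong)

lemma dual_exists:
  fixes V :: "'i \<Rightarrow> nat \<Rightarrow> real"
  shows "finite I \<Longrightarrow> (\<forall>j\<in>I. V j \<in> Rn k) \<Longrightarrow>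
    (\<forall>l. (\<forall>i. (\<Sum>j\<in>I. l j * V j i) = 0) \<longrightarrow> (\<forall>j\<in>I. l j = 0)) \<Longrightarrow>
    \<exists>w. (\<forall>j\<in>I. w j \<in> Rn k) \<and> (\<forall>j\<in>I. \<forall>j'\<in>I. ipk k (w j) (V j') = (if j = j' then 1 else 0))"
proof (induction I rule: finite_induct)
  case empty
  then show ?case by auto
next
  case (insert v I)
  have indI: "\<forall>l. (\<forall>i. (\<Sum>j\<in>I. l j * V j i) = 0) \<longrightarrow> (\<forall>j\<in>I. l j = 0)"
  proof (intro allI impI)
    fix l assume h: "\<forall>i. (\<Sum>j\<in>I. l j * V j i) = 0"
    have "\<forall>i. (\<Sum>j\<in>insert v I. (l(v := 0)) j * V j i) = 0"
    proof
      fix i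
      have "(\<Sum>j\<in>insert v I. (l(v := 0)) j * V j i) = (\<Sum>j\<in>I. (l(v := 0)) j * V j i)"
        using insert(1,2) by simp
      also have "\<dots> = (\<Sum>j\<in>I. l j * V j i)" using insert(1,2) by (intro sum.cong) auto
      finally show "(\<Sum>j\<in>insert v I. (l(v := 0)) j * V j i) = 0" using h by simp
    qed
    then have L0: "\<forall>j\<in>insert v I. (l(v := 0)) j = 0" using insert.prems(2) by blast
    show "\<forall>j\<in>I. l j = 0"
    proof
      fix j assume jI: "j \<in> I"
      then have "j \<noteq> v" using insert(2) by auto
      then show "l j = 0" using L0 jI by (metis fun_upd_other insertCI)
    qed
  qed
  obtain w' where w'R: "\<forall>j\<in>I. w' j \<in> Rn k"
    and w'd: "\<forall>j\<in>I. \<forall>j'\<in>I. ipk k (w' j) (V j') = (if j = j' then 1 else 0)"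
    using insert.IH insert.prems(1) indI by auto
  have VR: "V j \<in> Rn k" if "j \<in> insert v I" for j using insert.prems(1) that by blast
  define z where "z = (\<lambda>i. V v i - (\<Sum>j\<in>I. ipk k (w' j) (V v) * V j i))"
  have zR: "z \<in> Rn k" using VR by (auto simp: z_def Rn_def)
  have "\<exists>i. z i \<noteq> 0"
  proof (rule ccontr)
    assume "\<not> (\<exists>i. z i \<noteq> 0)"
    then have z0: "\<forall>i. z i = 0" by simp
    define l where "l j = (if j = v then 1 else - ipk k (w' j) (V v))" for j
    have "\<forall>i. (\<Sum>j\<in>insert v I. l j * V j i) = 0"
    proof
      fix i
      have "(\<Sum>j\<in>insert v I. l j * V j i) = V v i + (\<Sum>j\<in>I. l j * V j i)"
        using insert(1,2) by (simp add: l_def)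
      also have "(\<Sum>j\<in>I. l j * V j i) = - (\<Sum>j\<in>I. ipk k (w' j) (V v) * V j i)"
      proof -
        have "(\<Sum>j\<in>I. l j * V j i) = (\<Sum>j\<in>I. - (ipk k (w' j) (V v) * V j i))"
          by (rule sum.cong) (use insert(2) in \<open>auto simp: l_def\<close>)
        then show ?thesis by (simp add: sum_negf)
      qed
      finally show "(\<Sum>j\<in>insert v I. l j * V j i) = 0" using z0 by (simp add: z_def)
    qed
    then have "l v = 0" using insert.prems(2) by blast
    then show False by (simp add: l_def)
  qed
  then obtain i0 where "z i0 \<noteq> 0" by blast
  define D where "D = ipk k z z"
  have D: "0 < D" unfolding D_def by (rule ipk_pos[OF zR \<open>z i0 \<noteq> 0\<close>])
  define Q where "Q x = (\<lambda>i. x i - (\<Sum>j\<in>I. ipk k x (V j) * w' j i))" for x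
  have QR: "Q x \<in> Rn k" if "x \<in> Rn k" for x using that w'R by (auto simp: Q_def Rn_def)
  have QI: "ipk k (Q x) (V j0) = 0" if "j0 \<in> I" for x j0
  proof -
    have "ipk k (Q x) (V j0) = ipk k x (V j0) - (\<Sum>j\<in>I. ipk k x (V j) * ipk k (w' j) (V j0))"
      by (simp add: Q_def ipk_diff ipk_lin)
    also have "(\<Sum>j\<in>I. ipk k x (V j) * ipk k (w' j) (V j0)) = ipk k x (V j0)"
      using w'd that insert(1) by (simp add: delta_sum)
    finally show ?thesis by simp
  qed
  have Qv: "ipk k (Q z) (V v) = D"
  proof -
    have "ipk k (Q z) (V v) = ipk k z (V v) - (\<Sum>j\<in>I. ipk k z (V j) * ipk k (w' j) (V v))"
      by (simp add: Q_def ipk_diff ipk_lin)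
    moreover have "D = ipk k (V v) z - (\<Sum>j\<in>I. ipk k (w' j) (V v) * ipk k (V j) z)"
      unfolding D_def by (subst (1) z_def) (simp add: ipk_diff ipk_lin)
    ultimately show ?thesis by (simp add: ipk_sym mult.commute)
  qed
  define wv where "wv = (\<lambda>i. Q z i / D)"
  have wvR: "wv \<in> Rn k" using QR[OF zR] by (auto simp: wv_def Rn_def)
  have wvI: "ipk k wv (V j0) = 0" if "j0 \<in> I" for j0 using QI[OF that] by (simp add: wv_def ipk_divide)
  have wvv: "ipk k wv (V v) = 1" using Qv D by (simp add: wv_def ipk_divide)
  define w where "w j = (if j = v then wv else (\<lambda>i. w' j i - ipk k (w' j) (V v) * wv i))" for j
  show ?case
  proof (intro exI conjI ballI)
    fix j assume "j \<in> insert v I"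
    then show "w j \<in> Rn k" using wvR w'R by (auto simp: w_def Rn_def)
  next
    fix j j' assume j: "j \<in> insert v I" and j': "j' \<in> insert v I"
    show "ipk k (w j) (V j') = (if j = j' then 1 else 0)"
    proof (cases "j = v")
      case True
      then show ?thesis using j' wvv wvI insert(2) by (auto simp: w_def)
    next
      case False
      then have jI: "j \<in> I" using j by auto
      have "ipk k (w j) (V j') = ipk k (w' j) (V j') - ipk k (w' j) (V v) * ipk k wv (V j')"
        using False by (simp add: w_def ipk_diff ipk_scale)
      then show ?thesis using j' jI w'd wvv wvI False insert(2) by auto
    qed
  qed
qed

lemma cos_quartic: "\<bar>2 - 2 * cos (x::real) - x^2\<bar> \<le> x^4 / 12"
proof -
  obtain t where ct: "cos x = (\<Sum>m<4. cos_coeff m * x ^ m) + (cos (t + 1/2 * real 4 * pi) / fact 4) * x ^ 4"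
    using Maclaurin_cos_expansion[of x 4] by blast
  have s: "(\<Sum>m<4. cos_coeff m * x ^ m) = 1 - x^2/2"
  proof -
    have nd: "\<not> Suc (Suc 0) dvd Suc (Suc (Suc 0))" by presburger
    show ?thesis using nd by (simp add: cos_coeff_def eval_nat_numeral)
  qed
  have "\<bar>cos (t + 1/2 * real 4 * pi) / fact 4 * x ^ 4\<bar> \<le> x^4 / 24"
  proof -
    have "\<bar>cos (t + 1/2 * real 4 * pi)\<bar> \<le> 1" by simp
    moreover have "(fact 4 :: real) = 24" by (simp add: numeral_eq_Suc)
    moreover have "0 \<le> x^4" by simp
    moreover have "\<bar>cos t\<bar> * x ^ 4 \<le> x ^ 4"
      using mult_right_mono[OF abs_cos_le_one[of t] \<open>0 \<le> x^4\<close>] by simp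
    ultimately show ?thesis by (simp add: abs_mult)
  qed
  then have bR: "\<bar>cos (t + 1/2 * real 4 * pi) / fact 4 * x ^ 4\<bar> \<le> x^4 / 24" .
  have "2 - 2 * cos x - x^2 = -2 * (cos (t + 1/2 * real 4 * pi) / fact 4 * x ^ 4)"
    using ct s by simp
  then have "\<bar>2 - 2 * cos x - x^2\<bar> = 2 * \<bar>cos (t + 1/2 * real 4 * pi) / fact 4 * x ^ 4\<bar>"
    by (simp only: abs_mult abs_minus_cancel)
  then show ?thesis using bR by linarith
qed

lemma approx1:
  fixes t :: "(nat \<Rightarrow> real) \<Rightarrow> real"
  assumes T: "\<forall>a\<in>A. \<bar>t a\<bar> \<le> T" and T0: "0 \<le> T" and eta: "0 < \<eta>"
  shows "\<exists>p0. \<forall>p\<ge>p0. \<exists>P. realizable p A P \<and> (\<forall>a\<in>A. \<forall>a'\<in>A. P a a' = P a' a \<and> P a a = 0 \<and>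
            \<bar>P a a' - (t a - t a')^2\<bar> \<le> \<eta>)"
proof -
  define M where "M = 1 + (8*T + 2) / \<eta>"
  have M1: "1 \<le> M" using T0 eta by (simp add: M_def)
  have M0: "0 < M" using M1 by simp
  define c where "c a = round (M * t a)" for a
  define S where "S = 2 * M * T + 1"
  have Spos: "0 < S" using mult_nonneg_nonneg[of M T] M0 T0 unfolding S_def by linarith
  then have S0: "0 \<le> S" by simp
  define X where "X = 32 * S^4 / (M^2 * \<eta>)"
  have Xpos: "0 < X" using Spos eta M0 by (simp add: X_def)
  then have X0: "0 \<le> X" by simp
  define p0 where "p0 = nat \<lceil>X\<rceil> + 1"
  show ?thesis
  proof (rule exI[of _ p0], intro allI impI)
    fix p :: nat assume pp0: "p0 \<le> p"
    have pX: "X \<le> real p" using pp0 unfolding p0_def by linarith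
    have p1: "1 \<le> real p" using pp0 unfolding p0_def by linarith
    have pX2: "X \<le> (real p)^2"
      using pX p1 by (smt (verit) mult_le_cancel_left1 power2_eq_square)
    define W where "W = (real p / (2 * pi * M))^2"
    have W0: "0 \<le> W" by (simp add: W_def)
    define P where "P a a' = W * fp p (c a - c a')" for a a'
    have "realizable p A P" unfolding P_def by (rule real_scale[OF real_single W0])
    moreover have "P a a' = P a' a \<and> P a a = 0 \<and> \<bar>P a a' - (t a - t a')^2\<bar> \<le> \<eta>"
      if a: "a \<in> A" and a': "a' \<in> A" for a a'
    proof (intro conjI)
      show "P a a' = P a' a" unfolding P_def using fp_neg[of p "c a' - c a"] by simp
      show "P a a = 0" by (simp add: P_def)
      define s where "s = real_of_int (c a - c a')"
      define d where "d = t a - t a'"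
      define x where "x = 2 * pi * s / real p"
      have fpx: "fp p (c a - c a') = 2 - 2 * cos x" by (simp add: fp_def x_def s_def)
      have Wx2: "W * x^2 = s^2 / M^2" using p1 M0
        by (simp add: W_def x_def power_divide power_mult_distrib)
      have Wx4: "W * x^4 / 12 = pi^2 * s^4 / (3 * M^2 * (real p)^2)" using p1 M0
        by (simp add: W_def x_def power_divide power_mult_distrib field_simps eval_nat_numeral)
      define e where "e = s - M * d"
      have e1: "\<bar>e\<bar> \<le> 1"
      proof -
        have h1: "\<bar>of_int (c a) - M * t a\<bar> \<le> 1/2" and h2: "\<bar>of_int (c a') - M * t a'\<bar> \<le> 1/2"
          unfolding c_def by (rule of_int_round_abs_le)+
        have "e = (of_int (c a) - M * t a) - (of_int (c a') - M * t a')"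
          by (simp add: e_def s_def d_def algebra_simps)
        then show ?thesis using h1 h2 unfolding abs_le_iff by linarith
      qed
      have d2: "\<bar>d\<bar> \<le> 2 * T" using T a a' by (simp add: d_def) (smt (verit) T)
      have sS: "\<bar>s\<bar> \<le> S"
      proof -
        have "\<bar>M * d\<bar> \<le> M * (2 * T)" using d2 M0 by (simp add: abs_mult)
        then show ?thesis using e1 unfolding S_def e_def by linarith
      qed
      have s4: "s^4 \<le> S^4"
      proof -
        have "\<bar>s\<bar>^4 \<le> S^4" by (rule power_mono[OF sS]) simp
        then show ?thesis by (simp add: power_abs[symmetric] eval_nat_numeral)
      qed
      have err1: "\<bar>P a a' - s^2 / M^2\<bar> \<le> pi^2 * s^4 / (3 * M^2 * (real p)^2)"
      proof -
        have "P a a' - s^2 / M^2 = W * (2 - 2 * cos x - x^2)"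
          unfolding P_def fpx Wx2[symmetric] by (simp add: algebra_simps)
        then have "\<bar>P a a' - s^2 / M^2\<bar> = W * \<bar>2 - 2 * cos x - x^2\<bar>" using W0 by (simp add: abs_mult)
        also have "\<dots> \<le> W * (x^4 / 12)" by (rule mult_left_mono[OF cos_quartic W0])
        finally show ?thesis using Wx4 by simp
      qed
      have err2: "pi^2 * s^4 / (3 * M^2 * (real p)^2) \<le> \<eta> / 2"
      proof -
        have "pi^2 \<le> 4^2" by (rule power_mono) (use pi_less_4 pi_gt_zero in auto)
        then have pi2: "pi^2 \<le> 16" by simp
        have num: "pi^2 * s^4 \<le> 16 * S^4"
          by (rule mult_mono[OF pi2 s4]) simp_all
        have Mq: "0 < M^2" using M0 by simp
        have den: "M^2 * X \<le> 3 * M^2 * (real p)^2"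
        proof -
          have "M^2 * X \<le> M^2 * (real p)^2" using pX2 Mq by simp
          also have "\<dots> \<le> 3 * M^2 * (real p)^2" by simp
          finally show ?thesis .
        qed
        have "pi^2 * s^4 / (3 * M^2 * (real p)^2) \<le> 16 * S^4 / (M^2 * X)"
          by (rule frac_le[OF _ num _ den]) (use Mq Xpos in simp_all)
        also have "16 * S^4 / (M^2 * X) = \<eta> / 2"
        proof -
          have "M^2 * X = 32 * S^4 / \<eta>" using Mq by (simp add: X_def)
          then show ?thesis using Spos eta Xpos Mq by (simp add: field_simps)
        qed
        finally show ?thesis .
      qed
      have err3: "\<bar>s^2 / M^2 - d^2\<bar> \<le> \<eta> / 2"
      proof -
        have sd: "s / M = d + e / M" using M0 by (simp add: e_def field_simps)
        have sM: "s = M * d + e" by (simp add: e_def)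
        have "s^2 / M^2 - d^2 = (e / M) * (2 * d + e / M)"
          using M0 unfolding sM by (simp add: field_simps power2_eq_square)
        then have "\<bar>s^2 / M^2 - d^2\<bar> = \<bar>e / M\<bar> * \<bar>2 * d + e / M\<bar>" by (simp add: abs_mult)
        also have "\<dots> \<le> (1 / M) * (4 * T + 1)"
        proof (rule mult_mono)
          have "\<bar>e / M\<bar> = \<bar>e\<bar> / M" using M0 by (simp add: abs_divide)
          also have "\<dots> \<le> 1 / M" using divide_right_mono[OF e1, of M] M0 by simp
          finally show em: "\<bar>e / M\<bar> \<le> 1 / M" .
          have "1 / M \<le> 1" using M1 by simp
          then have "\<bar>e / M\<bar> \<le> 1" using em by linarith
          then show "\<bar>2 * d + e / M\<bar> \<le> 4 * T + 1" using d2 by linarith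
        qed (use M0 in simp_all)
        also have "\<dots> \<le> \<eta> / 2"
        proof -
          have "(8*T + 2) / \<eta> \<le> M" by (simp add: M_def)
          then have "8*T + 2 \<le> M * \<eta>" using eta by (simp add: divide_le_eq)
          then show ?thesis using M0 eta by (simp add: field_simps)
        qed
        finally show ?thesis .
      qed
      show "\<bar>P a a' - (t a - t a')^2\<bar> \<le> \<eta>"
        using err1 err2 err3 unfolding d_def by linarith
    qed
    ultimately show "\<exists>P. realizable p A P \<and> (\<forall>a\<in>A. \<forall>a'\<in>A. P a a' = P a' a \<and> P a a = 0 \<and>
            \<bar>P a a' - (t a - t a')^2\<bar> \<le> \<eta>)" by blast
  qed
qed

lemma aff_dual:
  assumes fin: "finite A" and Ak: "A \<subseteq> Rn k" and ai: "affinely_independent A" and a0: "a0 \<in> A"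
  shows "\<exists>W. (\<forall>a\<in>A. W a \<in> Rn k) \<and> (\<forall>a\<in>A. \<forall>a'\<in>A. \<forall>a''\<in>A.
            ipk k (W a) (\<lambda>i. a' i - a'' i) = (if a = a' then 1 else 0) - (if a = a'' then 1 else 0))"
proof -
  define I where "I = A - {a0}"
  define V where "V a = (\<lambda>i. a i - a0 i)" for a :: "nat \<Rightarrow> real"
  have finI: "finite I" using fin by (simp add: I_def)
  have VR: "\<forall>j\<in>I. V j \<in> Rn k"
  proof
    fix j assume "j \<in> I"
    then have "j \<in> Rn k" "a0 \<in> Rn k" using Ak a0 by (auto simp: I_def)
    then show "V j \<in> Rn k" by (simp add: V_def Rn_def)
  qed
  have ind: "\<forall>l. (\<forall>i. (\<Sum>j\<in>I. l j * V j i) = 0) \<longrightarrow> (\<forall>j\<in>I. l j = 0)"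
  proof (intro allI impI)
    fix l assume h: "\<forall>i. (\<Sum>j\<in>I. l j * V j i) = 0"
    define c where "c a = (if a = a0 then - (\<Sum>j\<in>I. l j) else l a)" for a
    have cI: "(\<Sum>a\<in>I. c a * g a) = (\<Sum>a\<in>I. l a * g a)" for g :: "(nat \<Rightarrow> real) \<Rightarrow> real"
      by (rule sum.cong) (auto simp: c_def I_def)
    have splitA: "(\<Sum>a\<in>A. f a) = f a0 + (\<Sum>a\<in>I. f a)" for f :: "(nat \<Rightarrow> real) \<Rightarrow> real"
      unfolding I_def using fin a0 by (simp add: sum.remove)
    have s1: "(\<Sum>a\<in>A. c a) = 0"
      using cI[of "\<lambda>_. 1"] by (simp add: splitA c_def)
    have s2: "\<forall>i. (\<Sum>a\<in>A. c a * a i) = 0"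
    proof
      fix i
      have "(\<Sum>a\<in>A. c a * a i) = - (\<Sum>j\<in>I. l j) * a0 i + (\<Sum>a\<in>I. l a * a i)"
        using cI[of "\<lambda>a. a i"] by (simp add: splitA c_def)
      also have "\<dots> = (\<Sum>j\<in>I. l j * V j i)"
        by (simp add: V_def right_diff_distrib sum_subtractf sum_distrib_right)
      finally show "(\<Sum>a\<in>A. c a * a i) = 0" using h by simp
    qed
    have c0: "\<forall>a\<in>A. c a = 0" using ai s1 s2 unfolding affinely_independent_def by blast
    show "\<forall>j\<in>I. l j = 0"
    proof
      fix j assume j: "j \<in> I"
      then have "c j = 0" "j \<noteq> a0" using c0 by (auto simp: I_def)
      then show "l j = 0" by (simp add: c_def)
    qed
  qed
  obtain wd where wdR: "\<forall>j\<in>I. wd j \<in> Rn k"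
    and wdd: "\<forall>j\<in>I. \<forall>j'\<in>I. ipk k (wd j) (V j') = (if j = j' then 1 else 0)"
    using dual_exists[OF finI VR ind] by blast
  define W where "W a = (if a = a0 then (\<lambda>i. \<Sum>j\<in>I. (-1) * wd j i) else wd a)" for a
  have WR: "\<forall>a\<in>A. W a \<in> Rn k" using wdR by (auto simp: W_def I_def Rn_def)
  have key: "ipk k (W a) (V a') = (if a = a' then 1 else 0) - (if a = a0 then 1 else 0)"
    if a: "a \<in> A" and a': "a' \<in> A" for a a'
  proof (cases "a' = a0")
    case True
    then have "V a' = (\<lambda>_. 0)" by (simp add: V_def)
    then show ?thesis using True by (simp add: ipk_def)
  next
    case a'0: False
    then have a'I: "a' \<in> I" using a' by (simp add: I_def)
    show ?thesis
    proof (cases "a = a0")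
      case True
      have "ipk k (W a) (V a') = ipk k (\<lambda>i. \<Sum>j\<in>I. (-1) * wd j i) (V a')"
        using True by (simp add: W_def)
      also have "\<dots> = (\<Sum>j\<in>I. (-1) * ipk k (wd j) (V a'))" by (rule ipk_lin)
      also have "\<dots> = (\<Sum>j\<in>I. (-1) * (if j = a' then 1 else 0))"
        using wdd a'I by (intro sum.cong) auto
      also have "\<dots> = -1" using finI a'I by (simp add: sum_negf)
      finally show ?thesis using True a'0 by simp
    next
      case False
      then have "a \<in> I" using a by (simp add: I_def)
      then show ?thesis using False wdd a'I by (simp add: W_def)
    qed
  qed
  show ?thesis
  proof (intro exI conjI)
    show "\<forall>a\<in>A. W a \<in> Rn k" by (rule WR)
    show "\<forall>a\<in>A. \<forall>a'\<in>A. \<forall>a''\<in>A. ipk k (W a) (\<lambda>i. a' i - a'' i) = (if a = a' then 1 else 0) - (if a = a'' then 1 else 0)"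
    proof (intro ballI)
      fix a a' a'' assume a: "a \<in> A" and a': "a' \<in> A" and a'': "a'' \<in> A"
      have "(\<lambda>i. a' i - a'' i) = (\<lambda>i. V a' i - V a'' i)" by (simp add: V_def)
      then have "ipk k (W a) (\<lambda>i. a' i - a'' i) = ipk k (W a) (V a') - ipk k (W a) (V a'')"
        by (simp add: ipk_sym[of k "W a"] ipk_diff)
      then show "ipk k (W a) (\<lambda>i. a' i - a'' i) = (if a = a' then 1 else 0) - (if a = a'' then 1 else 0)"
        using key[OF a a'] key[OF a a''] by simp
    qed
  qed
qed

lemma main_pat:
  assumes fin: "finite A" and Ak: "A \<subseteq> Rn k" and ai: "affinely_independent A"
  shows "\<exists>p0. \<forall>p. prime p \<and> p \<ge> p0 \<longrightarrow> realizable p A (\<lambda>a a'. sqd k a a')"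
proof (cases "A = {}")
  case True
  show ?thesis using True real_zero[of _ "{}"] unfolding realizable_def by auto
next
  case False
  then obtain a0 where a0: "a0 \<in> A" by blast
  obtain W where WR: "\<forall>a\<in>A. W a \<in> Rn k"
    and Wd: "\<forall>a\<in>A. \<forall>a'\<in>A. \<forall>a''\<in>A. ipk k (W a) (\<lambda>i. a' i - a'' i) = (if a = a' then 1 else 0) - (if a = a'' then 1 else 0)"
    using aff_dual[OF fin Ak ai a0] by blast
  define N where "N = card A"
  define Cw where "Cw = 1 + (\<Sum>a\<in>A. \<Sum>a'\<in>A. sqd k (W a) (W a'))"
  have Cw_ge: "sqd k (W a) (W a') \<le> Cw" if "a \<in> A" "a' \<in> A" for a a'
  proof -
    have "sqd k (W a) (W a') \<le> (\<Sum>a'\<in>A. sqd k (W a) (W a'))"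
      by (rule member_le_sum) (use that fin sqd_nonneg in auto)
    also have "\<dots> \<le> (\<Sum>a\<in>A. \<Sum>a'\<in>A. sqd k (W a) (W a'))"
      by (rule member_le_sum[where f="\<lambda>a. \<Sum>a'\<in>A. sqd k (W a) (W a')"]) (use that fin sqd_nonneg in \<open>auto intro: sum_nonneg\<close>)
    finally show ?thesis by (simp add: Cw_def)
  qed
  have Cw1: "1 \<le> Cw" unfolding Cw_def by (simp add: sum_nonneg sqd_nonneg)
  define s where "s = 1 / ((2 * real N + 1) * Cw)"
  have s0: "0 < s" using Cw1 by (simp add: s_def)
  have sCw: "(2 * real N + 1) * s * Cw = 1" using Cw1 by (simp add: s_def)
  define \<gamma> where "\<gamma> = 2 * s / (2 * real N + 1)"
  have g0: "0 < \<gamma>" using s0 by (simp add: \<gamma>_def)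
  define \<eta> where "\<eta> = \<gamma> / (real k + 1)"
  have eta0: "0 < \<eta>" using g0 by (simp add: \<eta>_def)
  have keta: "real k * \<eta> \<le> \<gamma>" using g0 by (simp add: \<eta>_def field_simps)
  define b where "b a = (\<lambda>i. a i - s * W a i)" for a
  define T where "T = (\<Sum>a\<in>A. \<Sum>l<k. \<bar>b a l\<bar>)"
  have T0: "0 \<le> T" by (simp add: T_def sum_nonneg)
  have Tb: "\<bar>b a l\<bar> \<le> T" if a: "a \<in> A" for a l
  proof (cases "l < k")
    case True
    have "\<bar>b a l\<bar> \<le> (\<Sum>l<k. \<bar>b a l\<bar>)" by (rule member_le_sum) (use True in auto)
    also have "\<dots> \<le> T" unfolding T_def
      by (rule member_le_sum[where f="\<lambda>a. \<Sum>l<k. \<bar>b a l\<bar>"]) (use a fin in \<open>auto intro: sum_nonneg\<close>)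
    finally show ?thesis .
  next
    case False
    then have "a l = 0" "W a l = 0" using a Ak WR by (auto simp: Rn_def)
    then show ?thesis using T0 by (simp add: b_def)
  qed
  have "\<forall>l. \<exists>p0. \<forall>p\<ge>p0. \<exists>P. realizable p A P \<and> (\<forall>a\<in>A. \<forall>a'\<in>A. P a a' = P a' a \<and> P a a = 0 \<and>
            \<bar>P a a' - (b a l - b a' l)^2\<bar> \<le> \<eta>)"
  proof
    fix l
    show "\<exists>p0. \<forall>p\<ge>p0. \<exists>P. realizable p A P \<and> (\<forall>a\<in>A. \<forall>a'\<in>A. P a a' = P a' a \<and> P a a = 0 \<and>
            \<bar>P a a' - (b a l - b a' l)^2\<bar> \<le> \<eta>)"
      by (rule approx1[of A "\<lambda>a. b a l" T \<eta>]) (use Tb T0 eta0 in auto)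
  qed
  then obtain p0f where p0f: "\<forall>l. \<forall>p\<ge>p0f l. \<exists>P. realizable p A P \<and> (\<forall>a\<in>A. \<forall>a'\<in>A. P a a' = P a' a \<and> P a a = 0 \<and>
            \<bar>P a a' - (b a l - b a' l)^2\<bar> \<le> \<eta>)"
    by metis
  define p0 where "p0 = 2 + (\<Sum>l<k. p0f l)"
  show ?thesis
  proof (rule exI[of _ p0], intro allI impI)
    fix p assume pp: "prime p \<and> p0 \<le> p"
    have p2: "2 \<le> p" using pp by (simp add: p0_def)
    have pl: "p0f l \<le> p" if "l < k" for l
    proof -
      have "p0f l \<le> (\<Sum>l<k. p0f l)" by (rule member_le_sum) (use that in auto)
      then show ?thesis using pp by (simp add: p0_def)
    qed
    have "\<forall>l. \<exists>P. l < k \<longrightarrow> realizable p A P \<and> (\<forall>a\<in>A. \<forall>a'\<in>A. P a a' = P a' a \<and> P a a = 0 \<and>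
            \<bar>P a a' - (b a l - b a' l)^2\<bar> \<le> \<eta>)"
      using p0f pl by blast
    then obtain Pf where Pf: "\<And>l. l < k \<Longrightarrow> realizable p A (Pf l) \<and> (\<forall>a\<in>A. \<forall>a'\<in>A. Pf l a a' = Pf l a' a \<and> Pf l a a = 0 \<and>
            \<bar>Pf l a a' - (b a l - b a' l)^2\<bar> \<le> \<eta>)"
      by metis
    define Pc where "Pc a a' = (\<Sum>l<k. Pf l a a')" for a a'
    have rPc: "realizable p A Pc" unfolding Pc_def
      by (rule real_sum) (use Pf in auto)
    have Pc_b: "\<bar>Pc a a' - sqd k (b a) (b a')\<bar> \<le> \<gamma>" if a: "a \<in> A" and a': "a' \<in> A" for a a'
    proof -
      have "\<bar>Pc a a' - sqd k (b a) (b a')\<bar> = \<bar>\<Sum>l<k. (Pf l a a' - (b a l - b a' l)^2)\<bar>"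
        by (simp add: Pc_def sqd_def sum_subtractf)
      also have "\<dots> \<le> (\<Sum>l<k. \<bar>Pf l a a' - (b a l - b a' l)^2\<bar>)" by (rule sum_abs)
      also have "\<dots> \<le> (\<Sum>l<k. \<eta>)"
      proof (rule sum_mono)
        fix l assume "l \<in> {..<k}"
        then show "\<bar>Pf l a a' - (b a l - b a' l)^2\<bar> \<le> \<eta>" using Pf[of l] a a' by blast
      qed
      also have "\<dots> = real k * \<eta>" by simp
      finally show ?thesis using keta by linarith
    qed
    have slack: "sqd k (b a) (b a') = sqd k a a' - 4 * s + s^2 * sqd k (W a) (W a')"
      if a: "a \<in> A" and a': "a' \<in> A" and ne: "a \<noteq> a'" for a a'
    proof -
      have "sqd k (b a) (b a') = (\<Sum>i<k. ((a i - a' i) - s * (W a i - W a' i))^2)"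
        unfolding sqd_def b_def by (rule sum.cong) (auto simp: algebra_simps)
      also have "\<dots> = sqd k a a' - 2 * s * (\<Sum>i<k. (a i - a' i) * (W a i - W a' i)) + s^2 * sqd k (W a) (W a')"
        by (simp add: sum_sq_expand sqd_def)
      also have "(\<Sum>i<k. (a i - a' i) * (W a i - W a' i)) = 2"
      proof -
        have "(\<Sum>i<k. (a i - a' i) * (W a i - W a' i)) = ipk k (W a) (\<lambda>i. a i - a' i) - ipk k (W a') (\<lambda>i. a i - a' i)"
          by (simp add: ipk_def sum_subtractf[symmetric] algebra_simps)
        then show ?thesis using Wd a a' ne by simp
      qed
      finally show ?thesis by simp
    qed
    define E where "E a a' = sqd k a a' - Pc a a'" for a a'
    have rE: "realizable p A E"
    proof (rule cut_box[where \<beta>="4 * s" and \<gamma>="s^2 * Cw + \<gamma>"])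
      show "finite A" by (rule fin)
      show "2 \<le> p" by (rule p2)
      show "E a a' = E a' a" if "a \<in> A" "a' \<in> A" for a a'
        using Pf that by (simp add: E_def Pc_def sqd_sym)
      show "E a a = 0" if "a \<in> A" for a using Pf that by (simp add: E_def Pc_def)
      show "\<bar>E a a' - 4 * s\<bar> \<le> s^2 * Cw + \<gamma>" if a: "a \<in> A" and a': "a' \<in> A" and ne: "a \<noteq> a'" for a a'
      proof -
        have e: "E a a' - 4 * s = (sqd k (b a) (b a') - Pc a a') - s^2 * sqd k (W a) (W a')"
          using slack[OF a a' ne] by (simp add: E_def)
        have "s^2 * sqd k (W a) (W a') \<le> s^2 * Cw" using Cw_ge[OF a a'] by (simp add: mult_left_mono)
        moreover have "0 \<le> s^2 * sqd k (W a) (W a')" by (simp add: sqd_nonneg)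
        ultimately show ?thesis using Pc_b[OF a a'] unfolding e by (simp add: abs_le_iff)
      qed
      have gg: "0 \<le> s^2 * Cw + \<gamma>" using g0 Cw1 by (simp add: add_nonneg_nonneg)
      show "0 \<le> s^2 * Cw + \<gamma>" by (rule gg)
      have "(2 * real (card A) - 3) * (s^2 * Cw + \<gamma>) \<le> (2 * real N + 1) * (s^2 * Cw + \<gamma>)"
        using gg by (intro mult_right_mono) (simp_all add: N_def)
      also have "\<dots> = ((2 * real N + 1) * s * Cw) * s + (2 * real N + 1) * \<gamma>"
        by (simp add: power2_eq_square algebra_simps)
      also have "\<dots> = 3 * s" using sCw by (simp add: \<gamma>_def)
      also have "\<dots> \<le> 4 * s" using s0 by simp
      finally show "(2 * real (card A) - 3) * (s^2 * Cw + \<gamma>) \<le> 4 * s" .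
    qed
    have "realizable p A (\<lambda>a a'. Pc a a' + E a a')" by (rule real_add[OF rPc rE])
    then show "realizable p A (\<lambda>a a'. sqd k a a')" by (rule real_cong) (simp add: E_def)
  qed
qed

theorem theorem6:
  fixes k :: nat and A :: "(nat \<Rightarrow> real) set"
  assumes "finite A" and "A \<subseteq> Rn k" and "affinely_independent A"
  shows "\<exists>p0. \<forall>p. prime p \<and> p \<ge> p0 \<longrightarrow> euclidean_sub_p_toral p k A"
proof -
  obtain p0 where p0: "\<forall>p. prime p \<and> p \<ge> p0 \<longrightarrow> realizable p A (\<lambda>a a'. sqd k a a')"
    using main_pat[OF assms] by blast
  show ?thesis
    by (rule exI[of _ p0]) (use p0 rep_toral[OF _ assms(1,2)] in blast)
qed


end
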